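(* Let $p,q\gg n^{-1}$. Let $G$ be an $n$-vertex $q$-cut-dense graph and let $S$ be a $p$-random subset of $V(G)$. Then with high probability $G[S]$ is $p^{20q^{-3}}q^3/400$-cut-dense.
   Context: A graph $G$ is $q$-cut-dense if for every partition $V(G)=A\cup B$ into disjoint sets, the number of edges between $A$ and $B$ is at least $q|A||B|$. A $p$-random subset contains each vertex independently with probability $p$. $G[S]$ is the induced subgraph on $S$. "$p,q\gg n^{-1}$" means $n$ is sufficiently large in terms of $p,q$; "with high probability" means with probability tending to $1$ as $n\to\infty$ (for fixed $p,q$). *)

theory Defs
  imports Complex_Main
begin

definition simple_graph :: "'a set \<Rightarrow> ('a \<Rightarrow> 'a \<Rightarrow> bool) \<Rightarrow> bool" where
  "simple_graph V E \<longleftrightarrow> (\<forall>x\<in>V. \<forall>y\<in>V. E x y = E y x) \<and> (\<forall>x\<in>V. \<not> E x x)"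

definition e_between :: "('a \<Rightarrow> 'a \<Rightarrow> bool) \<Rightarrow> 'a set \<Rightarrow> 'a set \<Rightarrow> nat" where
  "e_between E A B = card {(a, b). a \<in> A \<and> b \<in> B \<and> E a b}"

text \<open>Applied to a subset S of the vertex set,
  this expresses that the induced subgraph G[S] is q-cut-dense.\<close>
definition cut_dense :: "'a set \<Rightarrow> ('a \<Rightarrow> 'a \<Rightarrow> bool) \<Rightarrow> real \<Rightarrow> bool" where
  "cut_dense V E q \<longleftrightarrow>
     (\<forall>A B. A \<union> B = V \<and> A \<inter> B = {} \<longrightarrow>
        real (e_between E A B) \<ge> q * real (card A) * real (card B))"

text \<open>Probability that a p-random subset S of the finite set V (each vertex included
  independently with probability p) satisfies the property P.\<close>
definition random_subset_prob :: "'a set \<Rightarrow> real \<Rightarrow> ('a set \<Rightarrow> bool) \<Rightarrow> real" where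
  "random_subset_prob V p P =
     (\<Sum>S\<in>Pow V. if P S then p ^ card S * (1 - p) ^ (card V - card S) else 0)"

end

theory Submission
  imports Defs
begin

definition wt :: "'a set \<Rightarrow> real \<Rightarrow> 'a set \<Rightarrow> real" where
  "wt V p S = p ^ card S * (1-p) ^ (card V - card S)"

lemma wt_nonneg: "0 \<le> p \<Longrightarrow> p \<le> 1 \<Longrightarrow> 0 \<le> wt V p S"
  by (simp add: wt_def)

lemma mgf:
  fixes p x :: real
  assumes "finite V" "T \<subseteq> V"
  shows "(\<Sum>S\<in>Pow V. wt V p S * x ^ card (S \<inter> T)) = (1 - p + p*x) ^ card T"
proof -
  define f1 where "f1 i = p * (if i \<in> T then x else 1)" for i
  define f2 where "f2 (i::'a) = 1 - p" for i
  have "(\<Prod>i\<in>V. f1 i + f2 i) = (\<Sum>X\<in>Pow V. (\<Prod>i\<in>X. f1 i) * (\<Prod>i\<in>V-X. f2 i))"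
    by (rule prod_add[OF assms(1)])
  also have "\<dots> = (\<Sum>S\<in>Pow V. wt V p S * x ^ card (S \<inter> T))"
  proof (rule sum.cong[OF refl])
    fix X assume X: "X \<in> Pow V"
    then have fX: "finite X" using assms(1) finite_subset by auto
    have "(\<Prod>i\<in>X. f1 i) = p ^ card X * (\<Prod>i\<in>X. (if i \<in> T then x else 1))"
      by (simp add: f1_def prod.distrib)
    also have "(\<Prod>i\<in>X. (if i \<in> T then x else 1)) = x ^ card (X \<inter> T)"
      using fX by (simp add: prod.If_cases Int_commute)
    finally have 1: "(\<Prod>i\<in>X. f1 i) = p ^ card X * x ^ card (X \<inter> T)" .
    have 2: "(\<Prod>i\<in>V-X. f2 i) = (1-p) ^ (card V - card X)"
      using X assms(1) by (simp add: f2_def card_Diff_subset finite_subset)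
    show "(\<Prod>i\<in>X. f1 i) * (\<Prod>i\<in>V-X. f2 i) = wt V p X * x ^ card (X \<inter> T)"
      unfolding 1 2 wt_def by simp
  qed
  finally have "(\<Sum>S\<in>Pow V. wt V p S * x ^ card (S \<inter> T)) = (\<Prod>i\<in>V. f1 i + f2 i)" ..
  also have "\<dots> = (\<Prod>i\<in>V. (if i \<in> T then 1 - p + p*x else 1))"
    by (rule prod.cong) (auto simp: f1_def f2_def)
  also have "\<dots> = (1 - p + p*x) ^ card (V \<inter> T)"
    using assms(1) by (simp add: prod.If_cases Int_commute)
  also have "V \<inter> T = T" using assms(2) by auto
  finally show ?thesis .
qed

lemma wt_total: "finite V \<Longrightarrow> (\<Sum>S\<in>Pow V. wt V p S) = 1"
  using mgf[of V "{}" p 1] by simp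

lemma union_bound:
  fixes p :: real
  assumes "finite V" "finite F" "0 \<le> p" "p \<le> 1"
    and "\<And>S. S \<subseteq> V \<Longrightarrow> (\<forall>T\<in>F. \<not> bad T S) \<Longrightarrow> P S"
  shows "random_subset_prob V p P \<ge>
     1 - (\<Sum>T\<in>F. \<Sum>S\<in>Pow V. if bad T S then wt V p S else 0)"
proof -
  have rp: "random_subset_prob V p P = (\<Sum>S\<in>Pow V. if P S then wt V p S else 0)"
    unfolding random_subset_prob_def wt_def ..
  have split: "(\<Sum>S\<in>Pow V. wt V p S) = (\<Sum>S\<in>Pow V. if P S then wt V p S else 0)
      + (\<Sum>S\<in>Pow V. if P S then 0 else wt V p S)"
    by (subst sum.distrib[symmetric]) (rule sum.cong, auto)
  have le: "(\<Sum>S\<in>Pow V. if P S then 0 else wt V p S) \<le>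
       (\<Sum>S\<in>Pow V. \<Sum>T\<in>F. if bad T S then wt V p S else 0)"
  proof (rule sum_mono)
    fix S assume S: "S \<in> Pow V"
    show "(if P S then 0 else wt V p S) \<le> (\<Sum>T\<in>F. if bad T S then wt V p S else 0)"
    proof (cases "P S")
      case True
      then show ?thesis using assms(3,4) by (auto intro!: sum_nonneg wt_nonneg)
    next
      case False
      then obtain T where T: "T \<in> F" "bad T S" using assms(5) S by auto
      have "wt V p S = (if bad T S then wt V p S else 0)" using T by simp
      also have "\<dots> \<le> (\<Sum>T\<in>F. if bad T S then wt V p S else 0)"
        by (rule member_le_sum) (use T assms wt_nonneg in auto)
      finally show ?thesis using False by simp
    qed
  qed
  have "(\<Sum>S\<in>Pow V. \<Sum>T\<in>F. if bad T S then wt V p S else 0) =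
        (\<Sum>T\<in>F. \<Sum>S\<in>Pow V. if bad T S then wt V p S else 0)"
    by (rule sum.swap)
  then show ?thesis using rp split le wt_total[OF assms(1), of p] by linarith
qed

lemma tail:
  fixes p \<delta> :: real
  assumes fin: "finite V" and T: "T \<subseteq> V" and p: "0 < p" "p \<le> 1" and d: "0 < \<delta>" "\<delta> \<le> p"
  shows "(\<Sum>S\<in>Pow V. if real (card (S \<inter> T)) < p * card T - \<delta> * card V then wt V p S else 0)
     \<le> exp (- ((\<delta>/(2*p)) * \<delta> / (2 * (1 - \<delta>/(2*p)))) * card V)"
proof -
  define h where "h = \<delta>/(2*p)"
  define x where "x = 1 - h"
  define n where "n = real (card V)"
  define m where "m = real (card T)"
  define r where "r = p * m - \<delta> * n"
  have h: "0 < h" "h \<le> 1/2" using p d by (auto simp: h_def field_simps)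
  have x: "1/2 \<le> x" "x < 1" "0 < x" using h by (auto simp: x_def)
  have ph: "p * h = \<delta>/2" using p by (simp add: h_def field_simps)
  have mn: "m \<le> n" unfolding m_def n_def using card_mono[OF fin T] by simp
  have m0: "0 \<le> m" by (simp add: m_def)
  have goal_eq: "?thesis \<longleftrightarrow> (\<Sum>S\<in>Pow V. if real (card (S \<inter> T)) < r then wt V p S else 0)
     \<le> exp (- (h * \<delta> / (2 * x)) * n)"
    by (simp add: h_def x_def n_def m_def r_def)
  show ?thesis
  proof (cases "r \<le> 0")
    case True
    have "(\<Sum>S\<in>Pow V. if real (card (S \<inter> T)) < r then wt V p S else 0) = 0"
      by (rule sum.neutral) (use True in auto)
    then show ?thesis using goal_eq by simp
  next
    case False
    then have r: "0 < r" by simp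
    have "(\<Sum>S\<in>Pow V. if real (card (S \<inter> T)) < r then wt V p S else 0)
       \<le> (\<Sum>S\<in>Pow V. wt V p S * x ^ card (S \<inter> T) * x powr (-r))"
    proof (rule sum_mono)
      fix S assume "S \<in> Pow V"
      show "(if real (card (S \<inter> T)) < r then wt V p S else 0) \<le> wt V p S * x ^ card (S \<inter> T) * x powr (-r)"
      proof (cases "real (card (S \<inter> T)) < r")
        case True
        have e: "x ^ card (S \<inter> T) * x powr (-r) = x powr (real (card (S \<inter> T)) - r)"
          using x by (simp add: powr_realpow[symmetric] powr_add[symmetric])
        have "0 \<le> (real (card (S \<inter> T)) - r) * ln x"
          using True x by (intro mult_nonpos_nonpos) auto
        then have "1 \<le> x powr (real (card (S \<inter> T)) - r)"
          using x by (simp add: powr_def)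
        then have "wt V p S * 1 \<le> wt V p S * (x ^ card (S \<inter> T) * x powr (-r))"
          using e wt_nonneg[of p V S] p by (intro mult_left_mono) auto
        then show ?thesis using True by (simp add: mult.assoc)
      next
        case False
        then show ?thesis using wt_nonneg[of p V S] p x by auto
      qed
    qed
    also have "\<dots> = x powr (-r) * (\<Sum>S\<in>Pow V. wt V p S * x ^ card (S \<inter> T))"
      by (simp add: sum_distrib_left mult.commute mult.left_commute)
    also have "\<dots> = x powr (-r) * (1 - p + p*x) ^ card T"
      by (simp add: mgf[OF fin T])
    also have "\<dots> \<le> exp (r * h / x) * exp (- p * h * m)"
    proof (rule mult_mono)
      have "- ln x \<le> h / x"
      proof -
        have "ln (1/x) \<le> 1/x - 1" using x by (intro ln_le_minus_one) auto
        moreover have "1/x - 1 = h/x" using x by (simp add: x_def field_simps)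
        ultimately show ?thesis using x by (simp add: ln_div)
      qed
      then have "-r * ln x \<le> r * (h/x)"
        using r by (metis minus_mult_commute mult_left_mono less_imp_le mult_minus_right)
      then show "x powr (-r) \<le> exp (r * h / x)" using x by (simp add: powr_def)
      have b: "0 \<le> 1 - p + p*x" using p x by (simp add: x_def)
      have "1 - p + p*x \<le> exp (- p * h)"
        using exp_ge_add_one_self[of "-p*h"] by (simp add: x_def algebra_simps)
      then have "(1 - p + p*x) ^ card T \<le> exp (- p * h) ^ card T"
        by (rule power_mono[OF _ b])
      also have "\<dots> = exp (- p * h * m)" by (simp add: m_def exp_of_nat_mult[symmetric] mult.commute)
      finally show "(1 - p + p*x) ^ card T \<le> exp (- p * h * m)" .
    qed (use p x mult_nonneg_nonneg[of p x] in \<open>auto intro!: zero_le_power\<close>)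
    also have "\<dots> = exp (r * h / x - p * h * m)" by (simp add: exp_add[symmetric])
    also have "\<dots> \<le> exp (- (h * \<delta> / (2 * x)) * n)"
    proof -
      have "r * h - p*h*m*x \<le> - (h * \<delta> / 2) * n"
      proof -
        have "r * h - p*h*m*x = h * (p*h*m - \<delta> * n)" by (simp add: r_def x_def algebra_simps)
        also have "\<dots> \<le> h * (p*h*n - \<delta>*n)"
          using h mn p by (intro mult_left_mono) (auto intro: mult_left_mono)
        also have "\<dots> = - (h * \<delta> / 2) * n" using ph by (simp add: algebra_simps)
        finally show ?thesis .
      qed
      then have "(r * h - p*h*m*x) / x \<le> (- (h * \<delta> / 2) * n) / x"
        using x by (intro divide_right_mono) auto
      then have "r * h / x - p * h * m \<le> - (h * \<delta> / (2 * x)) * n"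
        using x by (simp add: field_simps)
      then show ?thesis by simp
    qed
    finally show ?thesis using goal_eq by simp
  qed
qed

abbreviation Ls :: "nat \<Rightarrow> 'a set \<Rightarrow> 'a list set" where
  "Ls k S \<equiv> {xs. set xs \<subseteq> S \<and> length xs = k}"

lemma sum_Ls_Suc:
  assumes "finite S"
  shows "(\<Sum>xs\<in>Ls (Suc k) S. g xs) = (\<Sum>xs\<in>Ls k S. \<Sum>v\<in>S. g (v # xs))"
proof -
  have inj: "inj_on (\<lambda>(xs, n). n # xs) (Ls k S \<times> S)" by (auto simp: inj_on_def)
  have "(\<Sum>xs\<in>Ls (Suc k) S. g xs) = (\<Sum>xs\<in>(\<lambda>(xs, n). n#xs) ` (Ls k S \<times> S). g xs)"
    by (simp add: lists_length_Suc_eq)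
  also have "\<dots> = (\<Sum>(xs,v)\<in>Ls k S \<times> S. g (v # xs))"
    by (subst sum.reindex[OF inj]) (simp add: case_prod_beta comp_def)
  also have "\<dots> = (\<Sum>xs\<in>Ls k S. \<Sum>v\<in>S. g (v # xs))"
    by (rule sum.cartesian_product[symmetric])
  finally show ?thesis .
qed

lemma sum_Ls_lin:
  fixes f :: "'a \<Rightarrow> real"
  assumes "finite S" "(\<Sum>v\<in>S. f v) = 0"
  shows "(\<Sum>xs\<in>Ls k S. sum_list (map f xs)) = 0"
proof (induction k)
  case 0
  then show ?case by simp
next
  case (Suc k)
  have "(\<Sum>xs\<in>Ls (Suc k) S. sum_list (map f xs)) = (\<Sum>xs\<in>Ls k S. \<Sum>v\<in>S. f v + sum_list (map f xs))"
    by (simp add: sum_Ls_Suc[OF assms(1)])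
  also have "\<dots> = (\<Sum>xs\<in>Ls k S. (\<Sum>v\<in>S. f v) + card S * sum_list (map f xs))"
    by (simp add: sum.distrib)
  also have "\<dots> = card S * (\<Sum>xs\<in>Ls k S. sum_list (map f xs))"
    using assms(2) by (simp add: sum_distrib_left)
  finally show ?case using Suc by simp
qed

lemma sum_Ls_sq:
  fixes f :: "'a \<Rightarrow> real"
  assumes fin: "finite S" and z: "(\<Sum>v\<in>S. f v) = 0"
  shows "(\<Sum>xs\<in>Ls k S. (sum_list (map f xs))^2) = real k * real (card S)^(k - 1) * (\<Sum>v\<in>S. (f v)^2)"
proof (induction k)
  case 0
  then show ?case by simp
next
  case (Suc k)
  have "(\<Sum>xs\<in>Ls (Suc k) S. (sum_list (map f xs))^2)
      = (\<Sum>xs\<in>Ls k S. \<Sum>v\<in>S. (f v)^2 + 2 * sum_list (map f xs) * f v + (sum_list (map f xs))^2)"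
    by (simp add: sum_Ls_Suc[OF fin] power2_eq_square algebra_simps)
  also have "\<dots> = (\<Sum>xs\<in>Ls k S. (\<Sum>v\<in>S. (f v)^2) + 2 * sum_list (map f xs) * (\<Sum>v\<in>S. f v)
        + card S * (sum_list (map f xs))^2)"
    by (simp add: sum.distrib sum_distrib_left)
  also have "\<dots> = real (card S)^k * (\<Sum>v\<in>S. (f v)^2) + card S * (\<Sum>xs\<in>Ls k S. (sum_list (map f xs))^2)"
    using z by (simp add: sum.distrib sum_distrib_left card_lists_length_eq[OF fin])
  also have "\<dots> = real (Suc k) * real (card S)^k * (\<Sum>v\<in>S. (f v)^2)"
    using Suc.IH by (cases k) (simp_all add: algebra_simps)
  finally show ?case by simp
qed

lemma sum_list_shift:
  fixes Y :: "'a \<Rightarrow> real"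
  shows "sum_list (map (\<lambda>v. Y v - \<mu>) xs) = sum_list (map Y xs) - real (length xs) * \<mu>"
  by (induction xs) (auto simp: algebra_simps)

lemma cheb:
  fixes Y :: "'a \<Rightarrow> real"
  assumes fin: "finite S" and mu: "0 < \<mu>" and muS: "(\<Sum>v\<in>S. Y v) = real (card S) * \<mu>"
  shows "real (card {xs\<in>Ls k S. sum_list (map Y xs) \<le> 0}) * (real k * \<mu>)^2
     \<le> real k * real (card S)^(k - 1) * (\<Sum>v\<in>S. (Y v)^2)"
proof -
  define f where "f v = Y v - \<mu>" for v
  have z: "(\<Sum>v\<in>S. f v) = 0" using muS by (simp add: f_def sum_subtractf)
  have finL: "finite (Ls k S)" using finite_lists_length_eq[OF fin] .
  have "real (card {xs\<in>Ls k S. sum_list (map Y xs) \<le> 0}) * (real k * \<mu>)^2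
      = (\<Sum>xs\<in>{xs\<in>Ls k S. sum_list (map Y xs) \<le> 0}. (real k * \<mu>)^2)" by simp
  also have "\<dots> \<le> (\<Sum>xs\<in>{xs\<in>Ls k S. sum_list (map Y xs) \<le> 0}. (sum_list (map f xs))^2)"
  proof (rule sum_mono)
    fix xs assume xs: "xs \<in> {xs\<in>Ls k S. sum_list (map Y xs) \<le> 0}"
    have "sum_list (map f xs) = sum_list (map Y xs) - real k * \<mu>"
      using xs by (simp add: f_def[abs_def] sum_list_shift)
    then have "sum_list (map f xs) \<le> - (real k * \<mu>)" using xs by simp
    moreover have "0 \<le> real k * \<mu>" using mu by simp
    ultimately show "(real k * \<mu>)^2 \<le> (sum_list (map f xs))^2"
      by (smt (verit) power_mono power2_minus)
  qed
  also have "\<dots> \<le> (\<Sum>xs\<in>Ls k S. (sum_list (map f xs))^2)"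
    by (rule sum_mono2[OF finL]) auto
  also have "\<dots> = real k * real (card S)^(k - 1) * (\<Sum>v\<in>S. (f v)^2)"
    by (rule sum_Ls_sq[OF fin z])
  also have "\<dots> \<le> real k * real (card S)^(k - 1) * (\<Sum>v\<in>S. (Y v)^2)"
  proof (rule mult_left_mono)
    have "(\<Sum>v\<in>S. (f v)^2) = (\<Sum>v\<in>S. (Y v)^2) - 2 * \<mu> * (\<Sum>v\<in>S. Y v) + real (card S) * \<mu>^2"
      by (simp add: f_def power2_eq_square algebra_simps sum.distrib sum_subtractf sum_distrib_left) (simp add: sum_distrib_left sum_distrib_right)
    also have "\<dots> = (\<Sum>v\<in>S. (Y v)^2) - real (card S) * \<mu>^2"
      using muS by (simp add: power2_eq_square algebra_simps)
    finally show "(\<Sum>v\<in>S. (f v)^2) \<le> (\<Sum>v\<in>S. (Y v)^2)" by simp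
  qed simp
  finally show ?thesis .
qed

definition nb :: "('a \<Rightarrow> 'a \<Rightarrow> bool) \<Rightarrow> 'a set \<Rightarrow> 'a \<Rightarrow> 'a set" where
  "nb E T x = {y\<in>T. E x y}"

lemma e_sum:
  assumes "finite A" "finite B"
  shows "e_between E A B = (\<Sum>x\<in>A. card (nb E B x))"
proof -
  have "{(a, b). a \<in> A \<and> b \<in> B \<and> E a b} = Sigma A (nb E B)"
    by (auto simp: nb_def)
  then show ?thesis unfolding e_between_def
    using assms by (simp add: nb_def)
qed

lemma e_sym:
  assumes "simple_graph V E" "A \<subseteq> V" "B \<subseteq> V"
  shows "e_between E A B = e_between E B A"
proof -
  have "{(a, b). a \<in> B \<and> b \<in> A \<and> E a b} = (\<lambda>(x,y). (y,x)) ` {(a, b). a \<in> A \<and> b \<in> B \<and> E a b}"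
  proof (rule set_eqI)
    have sym: "\<And>x y. x\<in>V \<Longrightarrow> y\<in>V \<Longrightarrow> E x y = E y x" using assms(1) unfolding simple_graph_def by auto
    fix z :: "'a \<times> 'a"
    obtain x y where z: "z = (x, y)" by fastforce
    have "z \<in> (\<lambda>(x,y). (y,x)) ` {(a, b). a \<in> A \<and> b \<in> B \<and> E a b} \<longleftrightarrow> (y, x) \<in> {(a, b). a \<in> A \<and> b \<in> B \<and> E a b}"
      unfolding z by (auto simp: image_iff)
    then show "z \<in> {(a, b). a \<in> B \<and> b \<in> A \<and> E a b} \<longleftrightarrow> z \<in> (\<lambda>(x,y). (y,x)) ` {(a, b). a \<in> A \<and> b \<in> B \<and> E a b}"
      unfolding z using sym assms(2,3) by auto
  qed
  moreover have "inj_on (\<lambda>(x,y). (y,x)) X" for X :: "('a \<times> 'a) set"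
    by (auto simp: inj_on_def)
  ultimately show ?thesis unfolding e_between_def by (simp add: card_image)
qed

lemma layer:
  assumes "finite A" "\<forall>x\<in>A. f x \<le> N"
  shows "(\<Sum>x\<in>A. f x) = (\<Sum>j\<in>{1..N}. card {x\<in>A. j \<le> f x})"
proof -
  have "(\<Sum>x\<in>A. f x) = (\<Sum>x\<in>A. \<Sum>j\<in>{1..N}. if j \<le> f x then 1 else 0)"
  proof (rule sum.cong[OF refl])
    fix x assume "x \<in> A"
    then have "{1..N} \<inter> {j. j \<le> f x} = {1..f x}" using assms(2) by auto
    then show "f x = (\<Sum>j\<in>{1..N}. if j \<le> f x then 1 else 0)"
      by (simp add: sum.If_cases)
  qed
  also have "\<dots> = (\<Sum>j\<in>{1..N}. \<Sum>x\<in>A. if j \<le> f x then 1 else 0)" by (rule sum.swap)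
  also have "\<dots> = (\<Sum>j\<in>{1..N}. card {x\<in>A. j \<le> f x})"
    using assms(1) by (simp add: sum.If_cases Int_def)
  finally show ?thesis .
qed

lemma deg:
  assumes "simple_graph V E" "cut_dense V E q" "finite V" "w \<in> V"
  shows "q * (real (card V) - 1) \<le> card (nb E V w)"
proof -
  have c1: "0 < card V" using assms(3,4) card_gt_0_iff by blast
  have c: "real (card (V - {w})) = real (card V) - 1"
    using assms(3,4) c1 by (simp add: card_Diff_singleton of_nat_diff)
  have p: "{w} \<union> (V - {w}) = V \<and> {w} \<inter> (V - {w}) = {}" using assms(4) by auto
  have 1: "q * real (card {w}) * real (card (V - {w})) \<le> real (e_between E {w} (V - {w}))"
    using assms(2) p unfolding cut_dense_def by blast
  have 2: "e_between E {w} (V - {w}) = card (nb E (V - {w}) w)"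
    using assms(3) by (simp add: e_sum)
  have 3: "card (nb E (V - {w}) w) \<le> card (nb E V w)"
    using assms(3) by (intro card_mono) (auto simp: nb_def)
  have "q * (real (card V) - 1) \<le> real (card (nb E (V - {w}) w))"
    using 1 c by (simp add: 2)
  then show ?thesis using 3 by (meson of_nat_le_iff order_trans)
qed

definition Yf :: "(nat \<Rightarrow> nat \<Rightarrow> bool) \<Rightarrow> nat set \<Rightarrow> nat \<Rightarrow> nat \<Rightarrow> real" where
  "Yf E A w v = (if E w v then (if v \<in> A then 1 else -1) else 0)"

lemma gen_w:
  fixes Y :: "nat \<Rightarrow> real" and a1 b1 :: real
  assumes fin: "finite S" and k: "0 < k" and sY: "(\<Sum>v\<in>S. Y v) = a1 - b1"
    and sY2: "(\<Sum>v\<in>S. (Y v)^2) \<le> a1 + b1" and ab: "2 * b1 < a1" "0 \<le> b1" and s: "0 < card S"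
  shows "a1 * card {xs\<in>Ls k S. sum_list (map Y xs) \<le> 0} \<le> 6 * real (card S)^(k+1) / k"
proof -
  define s where "s = real (card S)"
  define N where "N = real (card {xs\<in>Ls k S. sum_list (map Y xs) \<le> 0})"
  define \<mu> where "\<mu> = (a1 - b1) / s"
  have s0: "0 < s" using s by (simp add: s_def)
  have mu: "0 < \<mu>" using ab s0 by (simp add: \<mu>_def)
  have muS: "(\<Sum>v\<in>S. Y v) = real (card S) * \<mu>" using sY s0 by (simp add: \<mu>_def s_def)
  have ch: "N * (real k * \<mu>)^2 \<le> real k * s^(k - 1) * (a1 + b1)"
  proof -
    have "N * (real k * \<mu>)^2 \<le> real k * s^(k - 1) * (\<Sum>v\<in>S. (Y v)^2)"
      unfolding N_def s_def by (rule cheb[OF fin mu muS])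
    also have "\<dots> \<le> real k * s^(k - 1) * (a1 + b1)"
      using sY2 s0 by (intro mult_left_mono) auto
    finally show ?thesis .
  qed
  have sk: "s^(k-1) * s^2 = s^(k+1)"
    using k by (simp add: power_add[symmetric])
  have "N * real k * (a1 - b1)^2 \<le> s^(k+1) * (a1 + b1)"
  proof -
    have "N * (real k * \<mu>)^2 * (s^2 / real k) \<le> real k * s^(k - 1) * (a1 + b1) * (s^2 / real k)"
      using ch k s0 by (intro mult_right_mono) auto
    moreover have "N * (real k * \<mu>)^2 * (s^2 / real k) = N * real k * (a1 - b1)^2"
      using k s0 by (simp add: \<mu>_def power2_eq_square field_simps)
    moreover have "real k * s^(k - 1) * (a1 + b1) * (s^2 / real k) = s^(k+1) * (a1 + b1)"
      using k sk by (simp add: field_simps)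
    ultimately show ?thesis by simp
  qed
  then have "a1 * (N * real k * (a1 - b1)^2) \<le> a1 * (s^(k+1) * (a1 + b1))"
    using ab by (intro mult_left_mono) auto
  also have "\<dots> \<le> 6 * (a1 - b1)^2 * s^(k+1)"
  proof -
    have "0 \<le> (5*a1 - 3*b1)*(a1 - 2*b1)" using ab by (intro mult_nonneg_nonneg) auto
    moreover have "(5*a1 - 3*b1)*(a1 - 2*b1) = 6*(a1-b1)^2 - a1*(a1+b1)"
      by (simp add: power2_eq_square algebra_simps)
    ultimately have "a1 * (a1 + b1) \<le> 6 * (a1 - b1)^2" by linarith
    then have "s^(k+1) * (a1 * (a1 + b1)) \<le> s^(k+1) * (6 * (a1 - b1)^2)"
      using s0 by (intro mult_left_mono) auto
    then show ?thesis by (simp add: mult_ac)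
  qed
  finally have 1: "a1 * (N * real k * (a1 - b1)^2) \<le> 6 * (a1 - b1)^2 * s^(k+1)" .
  have r: "(6 * s^(k+1) / real k) * (real k * (a1 - b1)^2) = 6 * (a1 - b1)^2 * s^(k+1)"
    using k by simp
  have l: "(a1 * N) * (real k * (a1 - b1)^2) = a1 * (N * real k * (a1 - b1)^2)"
    by (simp add: mult_ac)
  have "(a1 * N) * (real k * (a1 - b1)^2) \<le> (6 * s^(k+1) / real k) * (real k * (a1 - b1)^2)"
    using 1 l r by simp
  moreover have "0 < real k * (a1 - b1)^2" using k ab by simp
  ultimately have "a1 * N \<le> 6 * s^(k+1) / real k" by (rule mult_right_le_imp_le)
  then show ?thesis by (simp add: N_def s_def)
qed

lemma sum_list_neg: "sum_list (map (\<lambda>v. - (f v :: real)) xs) = - sum_list (map f xs)"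
  by (induction xs) auto

lemma Yf_sums:
  assumes fin: "finite S" and SAB: "A \<union> B = S" and disj: "A \<inter> B = {}"
  shows "(\<Sum>v\<in>S. Yf E A w v) = real (card (nb E A w)) - real (card (nb E B w))"
    and "(\<Sum>v\<in>S. (Yf E A w v)^2) = real (card (nb E A w)) + real (card (nb E B w))"
proof -
  have fA: "finite A" and fB: "finite B" using fin SAB by auto
  have a: "(\<Sum>v\<in>A. Yf E A w v) = real (card (nb E A w))"
    using fA by (simp add: Yf_def sum.If_cases nb_def Int_def)
  have b: "(\<Sum>v\<in>B. Yf E A w v) = - real (card (nb E B w))"
  proof -
    have "(\<Sum>v\<in>B. Yf E A w v) = (\<Sum>v\<in>B. if E w v then -1 else 0)"
      using disj by (intro sum.cong) (auto simp: Yf_def)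
    also have "\<dots> = - real (card (nb E B w))"
      using fB by (simp add: sum.If_cases nb_def Int_def)
    finally show ?thesis .
  qed
  have a2: "(\<Sum>v\<in>A. (Yf E A w v)^2) = real (card (nb E A w))"
  proof -
    have "(\<Sum>v\<in>A. (Yf E A w v)^2) = (\<Sum>v\<in>A. if E w v then 1 else 0)"
      by (intro sum.cong) (auto simp: Yf_def)
    also have "\<dots> = real (card (nb E A w))"
      using fA by (simp add: sum.If_cases nb_def Int_def)
    finally show ?thesis .
  qed
  have b2: "(\<Sum>v\<in>B. (Yf E A w v)^2) = real (card (nb E B w))"
  proof -
    have "(\<Sum>v\<in>B. (Yf E A w v)^2) = (\<Sum>v\<in>B. if E w v then 1 else 0)"
      using disj by (intro sum.cong) (auto simp: Yf_def)
    also have "\<dots> = real (card (nb E B w))"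
      using fB by (simp add: sum.If_cases nb_def Int_def)
    finally show ?thesis .
  qed
  show "(\<Sum>v\<in>S. Yf E A w v) = real (card (nb E A w)) - real (card (nb E B w))"
    unfolding SAB[symmetric] sum.union_disjoint[OF fA fB disj] a b by simp
  show "(\<Sum>v\<in>S. (Yf E A w v)^2) = real (card (nb E A w)) + real (card (nb E B w))"
    unfolding SAB[symmetric] sum.union_disjoint[OF fA fB disj] a2 b2 by simp
qed

lemma sum_if_card: "finite L \<Longrightarrow> (\<Sum>xs\<in>L. if P xs then (c::real) else 0) = c * card {xs\<in>L. P xs}"
  by (simp add: sum.If_cases Int_def)

lemma choose_xs:
  fixes E :: "nat \<Rightarrow> nat \<Rightarrow> bool"
  assumes fin: "finite S" and SAB: "A \<union> B = S" and disj: "A \<inter> B = {}" and k: "0 < k"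
    and s: "0 < card S"
  defines "\<alpha> \<equiv> \<lambda>w. real (card (nb E A w))" and "\<beta> \<equiv> \<lambda>w. real (card (nb E B w))"
  shows "\<exists>xs\<in>Ls k S.
     (\<Sum>w\<in>{w\<in>A. 2 * \<beta> w < \<alpha> w}. if sum_list (map (Yf E A w) xs) < 0 then \<alpha> w else 0)
   + (\<Sum>w\<in>{w\<in>B. 2 * \<alpha> w < \<beta> w}. if 0 \<le> sum_list (map (Yf E A w) xs) then \<beta> w else 0)
   \<le> 6 * real (card S)^2 / k"
proof (rule ccontr)
  define L where "L = Ls k S"
  define A2 where "A2 = {w\<in>A. 2 * \<beta> w < \<alpha> w}"
  define B2 where "B2 = {w\<in>B. 2 * \<alpha> w < \<beta> w}"
  define C where "C xs = (\<Sum>w\<in>A2. if sum_list (map (Yf E A w) xs) < 0 then \<alpha> w else 0)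
   + (\<Sum>w\<in>B2. if 0 \<le> sum_list (map (Yf E A w) xs) then \<beta> w else 0)" for xs
  define s' where "s' = real (card S)"
  assume "\<not> ?thesis"
  then have big: "\<forall>xs\<in>L. 6 * s'^2 / k < C xs"
    by (auto simp: C_def L_def A2_def B2_def s'_def not_le)
  have finL: "finite L" using finite_lists_length_eq[OF fin] by (simp add: L_def)
  have cardL: "card L = card S ^ k" using card_lists_length_eq[OF fin] by (simp add: L_def)
  have Lne: "L \<noteq> {}" using s cardL by (auto simp del: Collect_empty_eq)
  have fA: "finite A" and fB: "finite B" using fin SAB by auto
  have A2S: "A2 \<subseteq> S" and B2S: "B2 \<subseteq> S" and A2B2: "A2 \<inter> B2 = {}"
    using SAB disj by (auto simp: A2_def B2_def)
  have perA: "\<alpha> w * card {xs\<in>L. sum_list (map (Yf E A w) xs) < 0} \<le> 6 * s'^(k+1) / k" if w: "w \<in> A2" for w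
  proof -
    have "card {xs\<in>L. sum_list (map (Yf E A w) xs) < 0} \<le> card {xs\<in>L. sum_list (map (Yf E A w) xs) \<le> 0}"
      using finL by (intro card_mono) auto
    then have "\<alpha> w * card {xs\<in>L. sum_list (map (Yf E A w) xs) < 0} \<le> \<alpha> w * card {xs\<in>L. sum_list (map (Yf E A w) xs) \<le> 0}"
      by (intro mult_left_mono) (auto simp: \<alpha>_def)
    also have "\<dots> \<le> 6 * s'^(k+1) / k"
      unfolding L_def s'_def \<alpha>_def
      by (rule gen_w[OF fin k Yf_sums(1)[OF fin SAB disj]]) (use w Yf_sums(2)[OF fin SAB disj] s in \<open>auto simp: A2_def \<alpha>_def \<beta>_def\<close>)
    finally show ?thesis .
  qed
  have perB: "\<beta> w * card {xs\<in>L. 0 \<le> sum_list (map (Yf E A w) xs)} \<le> 6 * s'^(k+1) / k" if w: "w \<in> B2" for w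
  proof -
    define Y' where "Y' = (\<lambda>v. - Yf E A w v)"
    have "{xs\<in>L. 0 \<le> sum_list (map (Yf E A w) xs)} = {xs\<in>L. sum_list (map Y' xs) \<le> 0}"
      by (auto simp: Y'_def sum_list_neg)
    moreover have "\<beta> w * card {xs\<in>Ls k S. sum_list (map Y' xs) \<le> 0} \<le> 6 * s'^(k+1) / k"
      unfolding s'_def \<alpha>_def \<beta>_def
    proof (rule gen_w[OF fin k])
      show "(\<Sum>v\<in>S. Y' v) = real (card (nb E B w)) - real (card (nb E A w))"
        using Yf_sums(1)[OF fin SAB disj, of E w] by (simp add: Y'_def sum_negf)
      show "(\<Sum>v\<in>S. (Y' v)^2) \<le> real (card (nb E B w)) + real (card (nb E A w))"
        using Yf_sums(2)[OF fin SAB disj, of E w] by (simp add: Y'_def)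
    qed (use w s in \<open>auto simp: B2_def \<alpha>_def \<beta>_def\<close>)
    ultimately show ?thesis by (simp add: L_def)
  qed
  have "(\<Sum>xs\<in>L. C xs) = (\<Sum>w\<in>A2. \<alpha> w * card {xs\<in>L. sum_list (map (Yf E A w) xs) < 0})
      + (\<Sum>w\<in>B2. \<beta> w * card {xs\<in>L. 0 \<le> sum_list (map (Yf E A w) xs)})"
    unfolding C_def sum.distrib
    by (subst (1 2) sum.swap) (simp add: sum_if_card[OF finL])
  also have "\<dots> \<le> (\<Sum>w\<in>A2. 6 * s'^(k+1) / k) + (\<Sum>w\<in>B2. 6 * s'^(k+1) / k)"
    by (intro add_mono sum_mono perA perB)
  also have "\<dots> = real (card A2 + card B2) * (6 * s'^(k+1) / k)" by (simp add: distrib_right add_divide_distrib)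
  also have "\<dots> \<le> s' * (6 * s'^(k+1) / k)"
  proof (rule mult_right_mono)
    have "card A2 + card B2 = card (A2 \<union> B2)"
      using A2B2 fin A2S B2S by (simp add: card_Un_disjoint finite_subset)
    also have "\<dots> \<le> card S" using A2S B2S fin by (intro card_mono) auto
    finally show "real (card A2 + card B2) \<le> s'" by (simp add: s'_def)
  qed (simp add: s'_def)
  also have "\<dots> = (\<Sum>xs\<in>L. 6 * s'^2 / k)"
    using cardL by (simp add: s'_def power_add power2_eq_square field_simps)
  also have "\<dots> < (\<Sum>xs\<in>L. C xs)"
    by (rule sum_strict_mono[OF finL Lne]) (use big in auto)
  finally show False by simp
qed

lemma lower_cross:
  fixes p \<delta> :: real
  assumes fin: "finite V" and XV: "X \<subseteq> V" and SV: "S \<subseteq> V" and p: "0 \<le> p" "p \<le> 1" and d: "0 \<le> \<delta>"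
    and g1: "\<forall>x\<in>V. p * card (nb E (V - X) x) - \<delta> * card V \<le> card (S \<inter> nb E (V - X) x)"
    and g2: "\<forall>j\<in>{1..card V}. p * card {x\<in>X. j \<le> card (nb E (V - X) x)} - \<delta> * card V
               \<le> card (S \<inter> {x\<in>X. j \<le> card (nb E (V - X) x)})"
  shows "p^2 * e_between E X (V - X) - 2 * \<delta> * (card V)^2 \<le> e_between E (X \<inter> S) ((V - X) \<inter> S)"
proof -
  define n where "n = card V"
  define f where "f x = card (nb E (V - X) x)" for x
  have fX: "finite X" using fin XV finite_subset by auto
  have fXS: "finite (X \<inter> S)" using fX by auto
  have fn: "\<forall>x\<in>A. f x \<le> n" for A
    unfolding f_def n_def nb_def using fin by (auto intro!: card_mono)
  have e1: "e_between E (X \<inter> S) ((V - X) \<inter> S) = (\<Sum>x\<in>X \<inter> S. card (S \<inter> nb E (V - X) x))"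
  proof -
    have "e_between E (X \<inter> S) ((V - X) \<inter> S) = (\<Sum>x\<in>X \<inter> S. card (nb E ((V - X) \<inter> S) x))"
      using fin fXS by (intro e_sum) auto
    also have "\<dots> = (\<Sum>x\<in>X \<inter> S. card (S \<inter> nb E (V - X) x))"
      by (intro sum.cong) (auto simp: nb_def intro!: arg_cong[where f=card])
    finally show ?thesis .
  qed
  have "real (e_between E (X \<inter> S) ((V - X) \<inter> S)) \<ge> (\<Sum>x\<in>X \<inter> S. p * f x - \<delta> * n)"
    unfolding e1 of_nat_sum
    by (intro sum_mono) (use g1 XV in \<open>auto simp: f_def n_def\<close>)
  also have "(\<Sum>x\<in>X \<inter> S. p * f x - \<delta> * n) = p * real (\<Sum>x\<in>X \<inter> S. f x) - \<delta> * n * card (X \<inter> S)"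
    by (simp add: sum_subtractf sum_distrib_left)
  finally have A: "p * real (\<Sum>x\<in>X \<inter> S. f x) - \<delta> * n * card (X \<inter> S) \<le> e_between E (X \<inter> S) ((V - X) \<inter> S)" .
  have "(\<Sum>x\<in>X \<inter> S. f x) = (\<Sum>j\<in>{1..n}. card {x\<in>X \<inter> S. j \<le> f x})"
    by (rule layer[OF fXS fn])
  also have "\<dots> = (\<Sum>j\<in>{1..n}. card (S \<inter> {x\<in>X. j \<le> f x}))"
    by (intro sum.cong refl arg_cong[where f=card]) auto
  finally have B1: "real (\<Sum>x\<in>X \<inter> S. f x) = (\<Sum>j\<in>{1..n}. real (card (S \<inter> {x\<in>X. j \<le> f x})))"
    by simp
  have B2: "(\<Sum>j\<in>{1..n}. p * card {x\<in>X. j \<le> f x} - \<delta> * n) \<le> (\<Sum>j\<in>{1..n}. real (card (S \<inter> {x\<in>X. j \<le> f x})))"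
    by (intro sum_mono) (use g2 in \<open>auto simp: f_def n_def\<close>)
  have B3: "(\<Sum>j\<in>{1..n}. p * card {x\<in>X. j \<le> f x} - \<delta> * n) = p * (\<Sum>j\<in>{1..n}. real (card {x\<in>X. j \<le> f x})) - \<delta> * n * n"
    by (simp add: sum_subtractf sum_distrib_left)
  have B4: "(\<Sum>j\<in>{1..n}. real (card {x\<in>X. j \<le> f x})) = real (e_between E X (V - X))"
  proof -
    have "(\<Sum>j\<in>{1..n}. card {x\<in>X. j \<le> f x}) = (\<Sum>x\<in>X. f x)"
      by (rule layer[OF fX fn, symmetric])
    also have "(\<Sum>x\<in>X. f x) = e_between E X (V - X)"
      unfolding f_def using fX fin by (intro e_sum[symmetric]) auto
    finally show ?thesis by (metis of_nat_sum)
  qed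
  have B: "p * e_between E X (V - X) - \<delta> * n * n \<le> real (\<Sum>x\<in>X \<inter> S. f x)"
    using B1 B2 B3[unfolded B4] by linarith
  have C: "card (X \<inter> S) \<le> n" unfolding n_def using fin XV by (intro card_mono) auto
  have "p * (p * e_between E X (V - X) - \<delta> * n * n) \<le> p * real (\<Sum>x\<in>X \<inter> S. f x)"
    using B p by (intro mult_left_mono) auto
  moreover have "\<delta> * n * card (X \<inter> S) \<le> \<delta> * n * n"
    using C d by (intro mult_left_mono) auto
  moreover have "p * (\<delta> * n * n) \<le> \<delta> * n * n" using p d by (simp add: mult_left_le_one_le)
  ultimately have "p^2 * e_between E X (V - X) - 2 * \<delta> * n^2 \<le> p * real (\<Sum>x\<in>X \<inter> S. f x) - \<delta> * n * card (X \<inter> S)"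
    by (simp add: power2_eq_square algebra_simps)
  then show ?thesis using A by (simp add: n_def)
qed

lemma upper_cross:
  assumes G: "simple_graph V E" and SV: "S \<subseteq> V" and fin: "finite V" and SAB: "A \<union> B = S"
    and disj: "A \<inter> B = {}"
  shows "e_between E (X \<inter> S) ((V - X) \<inter> S) \<le> 2 * e_between E A B
     + (\<Sum>y\<in>A - X. card (nb E A y)) + (\<Sum>x\<in>B \<inter> X. card (nb E B x))"
proof -
  have fA: "finite A" and fB: "finite B" using SAB SV fin finite_subset by auto
  have sym: "\<And>x y. x\<in>V \<Longrightarrow> y\<in>V \<Longrightarrow> E x y = E y x" using G unfolding simple_graph_def by auto
  define P where "P = {(a, b). a \<in> X \<inter> S \<and> b \<in> (V - X) \<inter> S \<and> E a b}"
  define P1 where "P1 = {(a, b). a \<in> A \<and> b \<in> B \<and> E a b}"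
  define P2 where "P2 = {(a, b). a \<in> B \<and> b \<in> A \<and> E a b}"
  define P3 where "P3 = (\<lambda>(y,x). (x,y)) ` Sigma (A - X) (nb E A)"
  define P4 where "P4 = Sigma (B \<inter> X) (nb E B)"
  have sub: "P \<subseteq> P1 \<union> P2 \<union> P3 \<union> P4"
  proof
    fix z assume z: "z \<in> P"
    then obtain x y where xy: "z = (x, y)" "x \<in> X \<inter> S" "y \<in> (V - X) \<inter> S" "E x y"
      by (auto simp: P_def)
    have "E y x" using sym xy SV by auto
    show "z \<in> P1 \<union> P2 \<union> P3 \<union> P4"
    proof (cases "x \<in> A")
      case True
      show ?thesis
      proof (cases "y \<in> A")
        case True
        then have "(y, x) \<in> Sigma (A - X) (nb E A)" using \<open>x \<in> A\<close> xy \<open>E y x\<close> by (auto simp: nb_def)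
        then have "z \<in> P3" unfolding P3_def using xy by (auto simp: image_iff)
        then show ?thesis by auto
      next
        case False
        then have "z \<in> P1" using True xy SAB by (auto simp: P1_def)
        then show ?thesis by auto
      qed
    next
      case False
      then have xB: "x \<in> B" using xy SAB by auto
      show ?thesis
      proof (cases "y \<in> A")
        case True
        then have "z \<in> P2" using xB xy by (auto simp: P2_def)
        then show ?thesis by auto
      next
        case False
        then have "z \<in> P4" using xB xy SAB by (auto simp: P4_def nb_def)
        then show ?thesis by auto
      qed
    qed
  qed
  have fP1: "finite P1" unfolding P1_def using fA fB
    by (rule finite_subset[rotated, OF finite_cartesian_product]) auto
  have fP2: "finite P2" unfolding P2_def using fB fA
    by (rule finite_subset[rotated, OF finite_cartesian_product]) auto
  have fS3: "finite (Sigma (A - X) (nb E A))" using fA by (auto simp: nb_def)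
  have fP3: "finite P3" unfolding P3_def using fS3 by auto
  have fP4: "finite P4" unfolding P4_def using fB by (auto simp: nb_def)
  have "card P \<le> card (P1 \<union> P2 \<union> P3 \<union> P4)"
    using fP1 fP2 fP3 fP4 sub by (intro card_mono) auto
  also have "\<dots> \<le> card P1 + card P2 + card P3 + card P4"
    by (meson add_mono card_Un_le le_refl order_trans)
  also have "card P2 = e_between E A B"
    using e_sym[OF G, of A B] SAB SV unfolding P2_def e_between_def by auto
  also have "card P1 = e_between E A B" unfolding P1_def e_between_def ..
  also have "card P3 \<le> (\<Sum>y\<in>A - X. card (nb E A y))"
  proof -
    have "card P3 \<le> card (Sigma (A - X) (nb E A))" unfolding P3_def by (rule card_image_le[OF fS3])
    also have "\<dots> = (\<Sum>y\<in>A - X. card (nb E A y))" using fA by (simp add: nb_def)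
    finally show ?thesis .
  qed
  also have "card P4 = (\<Sum>x\<in>B \<inter> X. card (nb E B x))" unfolding P4_def using fB by (simp add: nb_def)
  finally show ?thesis unfolding P_def e_between_def by simp
qed

lemma ar1:
  fixes p q n D a b e x :: real
  assumes p: "0<p" "p\<le>1" and q: "0<q" "q\<le>1" and n: "0<n" and D: "p*q*n/2 \<le> D"
    and a: "0\<le>a" and b: "b\<le>n" "0\<le>b" and e: "e \<le> p^2*q/400*a*b" and x: "0\<le>x" and xe: "x*(D/3) \<le> e"
  shows "x \<le> a/60"
proof -
  have pqn: "0 < p*q*n" using p q n by simp
  have 1: "x*(p*q*n/2) \<le> x*D" using D x by (intro mult_left_mono) auto
  have 2: "p^2*q/400*a*b \<le> p^2*q/400*a*n" using b a p q by (intro mult_left_mono) auto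
  have "(p*q*n) * (x/2) \<le> (p*q*n) * (3*p*a/400)"
    using 1 2 xe e by (simp add: power2_eq_square field_simps)
  then have "x/2 \<le> 3*p*a/400" using pqn by (rule mult_left_le_imp_le)
  moreover have "3*p*a \<le> 3*a" using p a by (simp add: mult_left_le_one_le)
  ultimately show ?thesis using a by linarith
qed

lemma inv_k:
  fixes p q :: real and k :: nat
  assumes p: "0<p" and q: "0<q" and k: "6144/(p^4*q^3) \<le> real k"
  shows "0 < real k" "1 / real k \<le> p^4*q^3/6144"
proof -
  have pq: "0 < p^4*q^3" using p q by simp
  have "0 < 6144/(p^4*q^3)" using pq by simp
  then show k0: "0 < real k" using k by linarith
  have "6144 \<le> real k * (p^4*q^3)" using k pq by (simp add: field_simps)
  then show "1 / real k \<le> p^4*q^3/6144" using k0 by (simp add: field_simps)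
qed

lemma C_bound:
  fixes p q n C :: real and k :: nat
  assumes p: "0<p" and q: "0<q" and k: "6144/(p^4*q^3) \<le> real k" and C: "C \<le> 6*n^2/k"
  shows "C \<le> p^4*q^3*n^2/1024"
proof -
  have "6*n^2 * (1/real k) \<le> 6*n^2 * (p^4*q^3/6144)"
    using inv_k[OF p q k] by (intro mult_left_mono) auto
  moreover have "6*n^2/k = 6*n^2*(1/real k)" by simp
  moreover have "6*n^2*(p^4*q^3/6144) = p^4*q^3*n^2/1024" by simp
  ultimately show ?thesis using C by linarith
qed

lemma ar2:
  fixes p q n D a C x :: real and k :: nat
  assumes p: "0<p" "p\<le>1" and q: "0<q" "q\<le>1" and n: "0<n" and D: "p*q*n/2 \<le> D"
    and a: "p*q*n/8 < a" and k: "6144/(p^4*q^3) \<le> real k" and C: "C \<le> 6*n^2/k"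
    and x: "0\<le>x" and xC: "x*(2*D/3) \<le> C"
  shows "x \<le> a/4"
proof -
  have Cb: "C \<le> p^4*q^3*n^2/1024" by (rule C_bound[OF p(1) q(1) k C])
  have 1: "x*(p*q*n/3) \<le> x*(2*D/3)" using D x by (intro mult_left_mono) auto
  have pq: "p^4*q^3 \<le> p^2*q^2"
  proof -
    have "p^2*q \<le> 1" using p q by (simp add: mult_le_one power_le_one)
    then have "(p^2*q^2)*(p^2*q) \<le> (p^2*q^2)*1" using p q by (intro mult_left_mono) auto
    moreover have "(p^2*q^2)*(p^2*q) = p^4*q^3" by (simp add: eval_nat_numeral)
    ultimately show ?thesis by simp
  qed
  have 2: "p^4*q^3*n^2/1024 \<le> p^2*q^2*n^2/1024"
    using pq by (intro divide_right_mono mult_right_mono) auto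
  have 3: "p^2*q^2*n^2/1024 \<le> (p*q*n/3)*(p*q*n/32)"
  proof -
    have "p^2*q^2*n^2/1024 = (p*q*n)^2/1024" by (simp add: power_mult_distrib)
    also have "\<dots> \<le> (p*q*n)^2/96" by (intro divide_left_mono) auto
    also have "\<dots> = (p*q*n/3)*(p*q*n/32)" by (simp add: power2_eq_square)
    finally show ?thesis .
  qed
  have "x*(p*q*n/3) \<le> (p*q*n/3)*(p*q*n/32)" using 1 2 3 xC Cb by linarith
  then have "(p*q*n/3)*x \<le> (p*q*n/3)*(p*q*n/32)" by (simp add: mult.commute)
  then have "x \<le> p*q*n/32" by (rule mult_left_le_imp_le) (use p q n in auto)
  then show ?thesis using a by linarith
qed

lemma ar3:
  fixes p q n a b e C X Y eG e' \<delta> :: real and k :: nat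
  assumes p: "0<p" "p\<le>1" and q: "0<q" "q\<le>1" and n: "0<n"
    and a: "p*q*n/8 < a" and b: "p*q*n/8 < b"
    and k: "6144/(p^4*q^3) \<le> real k" and C: "C \<le> 6*n^2/k" and d: "\<delta> = p^4*q^3/2048"
    and X: "a/2 \<le> X" and Y: "b/2 \<le> Y" and eG: "q*X*Y \<le> eG"
    and low: "p^2*eG - 2*\<delta>*n^2 \<le> e'" and up: "e' \<le> 6*e + C" and e: "e < p^2*q/400*a*b"
  shows False
proof -
  have Cb: "C \<le> p^4*q^3*n^2/1024" by (rule C_bound[OF p(1) q(1) k C])
  have pqn: "0 < p*q*n" using p q n by simp
  have a0: "0 < a" and b0: "0 < b" using a b pqn by linarith+
  have XY: "a*b/4 \<le> X*Y"
  proof -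
    have "(a/2)*(b/2) \<le> X*Y" using X Y a0 b0 by (intro mult_mono) auto
    then show ?thesis by simp
  qed
  have ab: "(p*q*n/8)*(p*q*n/8) \<le> a*b" using a b pqn by (intro mult_mono) auto
  define P where "P = p^2*q*(a*b)"
  have P0: "0 < P" using p q a0 b0 by (simp add: P_def)
  have "p^2*q*(a*b/4) \<le> p^2*q*(X*Y)" using XY p q by (intro mult_left_mono) auto
  also have "\<dots> = p^2*(q*X*Y)" by (simp add: mult_ac)
  also have "\<dots> \<le> p^2*eG" using eG by (intro mult_left_mono) auto
  finally have 1: "p^2*q*(a*b/4) \<le> p^2*eG" .
  have h1b: "p^2*q*(a*b/4) = P/4" by (simp add: P_def)
  have d2: "2*\<delta>*n^2 = p^4*q^3*n^2/1024" using d by simp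
  have 2: "p^4*q^3*n^2/512 = p^2*q*((p*q*n/8)*(p*q*n/8))/8"
    by (simp add: eval_nat_numeral)
  have 3: "p^2*q*((p*q*n/8)*(p*q*n/8)) \<le> p^2*q*(a*b)" using ab p q by (intro mult_left_mono) auto
  have 4: "6*e \<le> 6*P/400" using e by (simp add: P_def mult_ac)
  have "P/4 \<le> 6*P/400 + P/8" using 1 h1b d2 2 3 4 low up Cb unfolding P_def by linarith
  then show False using P0 by linarith
qed

definition sig :: "(nat \<Rightarrow> nat \<Rightarrow> bool) \<Rightarrow> (nat \<times> bool) list \<Rightarrow> nat \<Rightarrow> real" where
  "sig E qs w = sum_list (map (\<lambda>(v,b). if E w v then (if b then 1 else -1) else 0) qs)"

definition Xs :: "nat set \<Rightarrow> (nat \<Rightarrow> nat \<Rightarrow> bool) \<Rightarrow> (nat \<times> bool) list \<Rightarrow> nat set" where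
  "Xs V E qs = {w\<in>V. 0 \<le> sig E qs w}"

definition fam :: "nat set \<Rightarrow> (nat \<Rightarrow> nat \<Rightarrow> bool) \<Rightarrow> nat \<Rightarrow> nat set set" where
  "fam V E k = (\<Union>qs\<in>Ls k (V \<times> UNIV). (\<lambda>x. nb E (V - Xs V E qs) x) ` V
       \<union> (\<lambda>j. {x\<in>Xs V E qs. j \<le> card (nb E (V - Xs V E qs) x)}) ` {1..card V})
     \<union> (\<lambda>v. nb E V v) ` V"

lemma sig_map: "sig E (map (\<lambda>v. (v, v\<in>A)) xs) w = sum_list (map (Yf E A w) xs)"
  by (induction xs) (auto simp: sig_def Yf_def)

lemma nb_split:
  assumes "finite S" "A \<union> B = S" "A \<inter> B = {}"
  shows "card (nb E S w) = card (nb E A w) + card (nb E B w)"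
proof -
  have "nb E S w = nb E A w \<union> nb E B w" using assms by (auto simp: nb_def)
  moreover have "nb E A w \<inter> nb E B w = {}" using assms by (auto simp: nb_def)
  moreover have "finite (nb E A w)" "finite (nb E B w)" using assms by (auto simp: nb_def)
  ultimately show ?thesis by (simp add: card_Un_disjoint)
qed

lemma small_case:
  fixes c0 \<theta> D :: real
  assumes fin: "finite V" and SV: "S \<subseteq> V" and SAB: "A \<union> B = S" and disj: "A \<inter> B = {}"
    and degS: "\<forall>w\<in>A. D \<le> card (nb E S w)" and small: "card A \<le> \<theta> * card V"
    and key: "c0 * card V \<le> D - \<theta> * card V" and c0: "0 \<le> c0"
  shows "c0 * card A * card B \<le> e_between E A B"
proof -
  have fS: "finite S" using fin SV finite_subset by auto
  have fA: "finite A" and fB: "finite B" using fS SAB by auto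
  have "real (e_between E A B) = (\<Sum>w\<in>A. real (card (nb E B w)))"
    using e_sum[OF fA fB] by simp
  also have "\<dots> \<ge> (\<Sum>w\<in>A. c0 * card V)"
  proof (rule sum_mono)
    fix w assume w: "w \<in> A"
    have "card (nb E A w) \<le> card A" using fA by (intro card_mono) (auto simp: nb_def)
    moreover have "D \<le> card (nb E S w)" using degS w by auto
    ultimately have "real (card (nb E B w)) \<ge> D - card A"
      using nb_split[OF fS SAB disj, of E w] by linarith
    then show "c0 * card V \<le> real (card (nb E B w))" using small key by linarith
  qed
  finally have "card A * (c0 * card V) \<le> e_between E A B" by simp
  moreover have "card B \<le> card V" using SAB SV fin by (intro card_mono) auto
  then have "c0 * card A * card B \<le> c0 * card A * card V"
    using c0 by (intro mult_left_mono) auto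
  then have "c0 * card A * card B \<le> card A * (c0 * card V)" by (simp add: mult_ac)
  ultimately show ?thesis by linarith
qed

lemma big_case:
  fixes p q \<delta> D :: real and k :: nat
  assumes G: "simple_graph V E" and cd: "cut_dense V E q" and fin: "finite V" and SV: "S \<subseteq> V"
    and SAB: "A \<union> B = S" and disj: "A \<inter> B = {}"
    and p: "0<p" "p\<le>1" and q: "0<q" "q\<le>1" and d: "\<delta> = p^4*q^3/2048"
    and k: "6144/(p^4*q^3) \<le> real k"
    and good: "\<forall>T\<in>fam V E k. p * card T - \<delta> * card V \<le> card (S \<inter> T)"
    and Dd: "p*q*card V/2 \<le> D" and degS: "\<forall>w\<in>V. D \<le> card (nb E S w)"
    and a: "p*q*card V/8 < card A" and b: "p*q*card V/8 < card B"
  shows "p^2*q/400 * card A * card B \<le> e_between E A B"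
proof (rule ccontr)
  assume "\<not> ?thesis"
  then have elt: "real (e_between E A B) < p^2*q/400 * card A * card B" by simp
  define n where "n = real (card V)"
  define e where "e = real (e_between E A B)"
  have fS: "finite S" using fin SV finite_subset by auto
  have fA: "finite A" and fB: "finite B" using fS SAB by auto
  have AV: "A \<subseteq> V" and BV: "B \<subseteq> V" using SAB SV by auto
  have pqn0: "0 \<le> p*q*card V/8" using p q by simp
  have cA: "0 < card A" using a pqn0 by linarith
  have cB: "0 < card B" using b pqn0 by linarith
  have cS: "0 < card S" using cA fS SAB by (metis card_gt_0_iff Un_empty finite_Un)
  have cV: "0 < card V" using cS fin SV by (metis card_gt_0_iff subset_empty)
  have n0: "0 < n" using cV by (simp add: n_def)
  have sn: "card S \<le> card V" using fin SV by (rule card_mono)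
  have an: "card A \<le> card V" using fin AV by (rule card_mono)
  have bn: "card B \<le> card V" using fin BV by (rule card_mono)
  have k0: "0 < k" using inv_k(1)[OF p(1) q(1) k] by simp
  define \<alpha> where "\<alpha> w = real (card (nb E A w))" for w
  define \<beta> where "\<beta> w = real (card (nb E B w))" for w
  obtain xs where xs: "xs \<in> Ls k S" and cost:
    "(\<Sum>w\<in>{w\<in>A. 2 * \<beta> w < \<alpha> w}. if sum_list (map (Yf E A w) xs) < 0 then \<alpha> w else 0)
   + (\<Sum>w\<in>{w\<in>B. 2 * \<alpha> w < \<beta> w}. if 0 \<le> sum_list (map (Yf E A w) xs) then \<beta> w else 0)
   \<le> 6 * real (card S)^2 / k"
    using choose_xs[OF fS SAB disj k0 cS, of E] unfolding \<alpha>_def \<beta>_def by blast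
  define qs where "qs = map (\<lambda>v. (v, v\<in>A)) xs"
  have qsL: "qs \<in> Ls k (V \<times> UNIV)" using xs SV by (auto simp: qs_def)
  define X where "X = Xs V E qs"
  have XV: "X \<subseteq> V" by (auto simp: X_def Xs_def)
  have memX: "w \<in> X \<longleftrightarrow> 0 \<le> sum_list (map (Yf E A w) xs)" if "w \<in> V" for w
    using that by (simp add: X_def Xs_def qs_def sig_map)
  define A2 where "A2 = {w\<in>A. 2 * \<beta> w < \<alpha> w}"
  define B2 where "B2 = {w\<in>B. 2 * \<alpha> w < \<beta> w}"
  define A1 where "A1 = A - A2"
  define B1 where "B1 = B - B2"
  define CA where "CA = (\<Sum>w\<in>A2 - X. \<alpha> w)"
  define CB where "CB = (\<Sum>w\<in>B2 \<inter> X. \<beta> w)"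
  have fA2: "finite A2" "finite A1" and fB2: "finite B2" "finite B1"
    using fA fB by (auto simp: A2_def B2_def A1_def B1_def)
  have CAeq: "(\<Sum>w\<in>A2. if sum_list (map (Yf E A w) xs) < 0 then \<alpha> w else 0) = CA"
  proof -
    have "(\<Sum>w\<in>A2. if sum_list (map (Yf E A w) xs) < 0 then \<alpha> w else 0)
        = (\<Sum>w\<in>A2. if w \<notin> X then \<alpha> w else 0)"
      using AV memX by (intro sum.cong) (auto simp: A2_def)
    also have "\<dots> = CA" unfolding CA_def using fA2 by (simp add: sum.If_cases Diff_eq Int_def)
    finally show ?thesis .
  qed
  have CBeq: "(\<Sum>w\<in>B2. if 0 \<le> sum_list (map (Yf E A w) xs) then \<beta> w else 0) = CB"
  proof -
    have "(\<Sum>w\<in>B2. if 0 \<le> sum_list (map (Yf E A w) xs) then \<beta> w else 0)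
        = (\<Sum>w\<in>B2. if w \<in> X then \<beta> w else 0)"
      using BV memX by (intro sum.cong) (auto simp: B2_def)
    also have "\<dots> = CB" unfolding CB_def using fB2 by (simp add: sum.If_cases Int_def)
    finally show ?thesis .
  qed
  have CAB: "CA + CB \<le> 6 * n^2 / k"
  proof -
    have "CA + CB \<le> 6 * real (card S)^2 / k" using cost CAeq CBeq by (simp add: A2_def B2_def)
    also have "\<dots> \<le> 6 * n^2 / k"
      using sn k0 by (intro divide_right_mono mult_left_mono power_mono) (auto simp: n_def)
    finally show ?thesis .
  qed
  have CA0: "0 \<le> CA" and CB0: "0 \<le> CB" by (auto simp: CA_def CB_def \<alpha>_def \<beta>_def intro!: sum_nonneg)
  have ab_D: "D \<le> \<alpha> w + \<beta> w" if "w \<in> V" for w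
  proof -
    have 1: "D \<le> real (card (nb E S w))" using degS that by blast
    show ?thesis using 1 unfolding \<alpha>_def \<beta>_def nb_split[OF fS SAB disj] by simp
  qed
  have eA: "e = (\<Sum>w\<in>A. \<beta> w)" using e_sum[OF fA fB] by (simp add: e_def \<beta>_def)
  have eB: "e = (\<Sum>w\<in>B. \<alpha> w)"
    using e_sum[OF fB fA] e_sym[OF G AV BV] by (simp add: e_def \<alpha>_def)
  have sA1b: "(\<Sum>w\<in>A1. \<beta> w) \<le> e"
    unfolding eA using fA by (intro sum_mono2) (auto simp: A1_def \<beta>_def)
  have sB1a: "(\<Sum>w\<in>B1. \<alpha> w) \<le> e"
    unfolding eB using fB by (intro sum_mono2) (auto simp: B1_def \<alpha>_def)
  have i1: "card A1 * (D/3) \<le> e"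
  proof -
    have "(\<Sum>w\<in>A1. D/3) \<le> (\<Sum>w\<in>A1. \<beta> w)"
    proof (rule sum_mono)
      fix w assume w: "w \<in> A1"
      then have "\<alpha> w \<le> 2 * \<beta> w" "w \<in> V" using AV by (auto simp: A1_def A2_def)
      then show "D/3 \<le> \<beta> w" using ab_D by force
    qed
    then show ?thesis using sA1b by simp
  qed
  have i2: "card B1 * (D/3) \<le> e"
  proof -
    have "(\<Sum>w\<in>B1. D/3) \<le> (\<Sum>w\<in>B1. \<alpha> w)"
    proof (rule sum_mono)
      fix w assume w: "w \<in> B1"
      then have "\<beta> w \<le> 2 * \<alpha> w" "w \<in> V" using BV by (auto simp: B1_def B2_def)
      then show "D/3 \<le> \<alpha> w" using ab_D by force
    qed
    then show ?thesis using sB1a by simp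
  qed
  have ii1: "card (A2 - X) * (2*D/3) \<le> CA"
  proof -
    have "(\<Sum>w\<in>A2 - X. 2*D/3) \<le> (\<Sum>w\<in>A2 - X. \<alpha> w)"
    proof (rule sum_mono)
      fix w assume w: "w \<in> A2 - X"
      then have "2 * \<beta> w < \<alpha> w" "w \<in> V" using AV by (auto simp: A2_def)
      then show "2*D/3 \<le> \<alpha> w" using ab_D by force
    qed
    then show ?thesis by (simp add: CA_def)
  qed
  have ii2: "card (B2 \<inter> X) * (2*D/3) \<le> CB"
  proof -
    have "(\<Sum>w\<in>B2 \<inter> X. 2*D/3) \<le> (\<Sum>w\<in>B2 \<inter> X. \<beta> w)"
    proof (rule sum_mono)
      fix w assume w: "w \<in> B2 \<inter> X"
      then have "2 * \<alpha> w < \<beta> w" "w \<in> V" using BV by (auto simp: B2_def)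
      then show "2*D/3 \<le> \<beta> w" using ab_D by force
    qed
    then show ?thesis by (simp add: CB_def)
  qed
  have Dn: "p*q*n/2 \<le> D" using Dd by (simp add: n_def)
  have eab: "e \<le> p^2*q/400*card A*card B" using elt by (simp add: e_def)
  have eba: "e \<le> p^2*q/400*card B*card A" using elt by (simp add: e_def mult_ac)
  have A1b: "card A1 \<le> real (card A)/60"
    by (rule ar1[OF p q n0 Dn _ _ _ eab _ i1]) (use bn in \<open>auto simp: n_def\<close>)
  have B1b: "card B1 \<le> real (card B)/60"
    by (rule ar1[OF p q n0 Dn _ _ _ eba _ i2]) (use an in \<open>auto simp: n_def\<close>)
  have A2b: "card (A2 - X) \<le> real (card A)/4"
    by (rule ar2[OF p q n0 Dn _ k _ _ ii1]) (use a CAB CB0 in \<open>auto simp: n_def\<close>)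
  have B2b: "card (B2 \<inter> X) \<le> real (card B)/4"
    by (rule ar2[OF p q n0 Dn _ k _ _ ii2]) (use b CAB CA0 in \<open>auto simp: n_def\<close>)
  have Xb: "real (card A)/2 \<le> card X"
  proof -
    have "A - X \<subseteq> A1 \<union> (A2 - X)" by (auto simp: A1_def)
    then have "card (A - X) \<le> card A1 + card (A2 - X)"
      by (meson card_Un_le card_mono fA2 finite_Diff finite_UnI order_trans)
    moreover have "card (A \<inter> X) + card (A - X) = card A"
      using fA by (metis card_Int_Diff)
    moreover have "card (A \<inter> X) \<le> card X" using fin XV by (intro card_mono) (auto intro: finite_subset)
    ultimately show ?thesis using A1b A2b by linarith
  qed
  have Yb: "real (card B)/2 \<le> card (V - X)"
  proof -
    have "B \<inter> X \<subseteq> B1 \<union> (B2 \<inter> X)" by (auto simp: B1_def)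
    then have "card (B \<inter> X) \<le> card B1 + card (B2 \<inter> X)"
      by (meson card_Un_le card_mono fB2 finite_Int finite_UnI order_trans)
    moreover have "card (B \<inter> X) + card (B - X) = card B"
      using fB by (metis card_Int_Diff)
    moreover have "card (B - X) \<le> card (V - X)" using fin BV by (intro card_mono) auto
    ultimately show ?thesis using B1b B2b by linarith
  qed
  have eG: "q * card X * card (V - X) \<le> e_between E X (V - X)"
    using cd XV unfolding cut_dense_def by (metis Diff_disjoint Un_Diff_cancel sup.absorb_iff2 Int_commute)
  have g1: "\<forall>x\<in>V. p * card (nb E (V - X) x) - \<delta> * card V \<le> card (S \<inter> nb E (V - X) x)"
  proof
    fix x assume "x \<in> V"
    then have "nb E (V - X) x \<in> fam V E k" using qsL unfolding fam_def X_def by blast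
    then show "p * card (nb E (V - X) x) - \<delta> * card V \<le> card (S \<inter> nb E (V - X) x)" using good by blast
  qed
  have g2: "\<forall>j\<in>{1..card V}. p * card {x\<in>X. j \<le> card (nb E (V - X) x)} - \<delta> * card V
               \<le> card (S \<inter> {x\<in>X. j \<le> card (nb E (V - X) x)})"
  proof
    fix j assume "j \<in> {1..card V}"
    then have "{x\<in>X. j \<le> card (nb E (V - X) x)} \<in> fam V E k" using qsL unfolding fam_def X_def by blast
    then show "p * card {x\<in>X. j \<le> card (nb E (V - X) x)} - \<delta> * card V
               \<le> card (S \<inter> {x\<in>X. j \<le> card (nb E (V - X) x)})" using good by blast
  qed
  have d0: "0 \<le> \<delta>" unfolding d using p q by simp
  have low: "p^2 * e_between E X (V - X) - 2 * \<delta> * n^2 \<le> e_between E (X \<inter> S) ((V - X) \<inter> S)"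
    using lower_cross[OF fin XV SV _ _ d0 g1 g2] p by (simp add: n_def)
  have up0: "e_between E (X \<inter> S) ((V - X) \<inter> S) \<le> 2 * e_between E A B
     + (\<Sum>y\<in>A - X. card (nb E A y)) + (\<Sum>x\<in>B \<inter> X. card (nb E B x))"
    by (rule upper_cross[OF G SV fin SAB disj])
  have sAX: "(\<Sum>y\<in>A - X. \<alpha> y) \<le> 2*e + CA"
  proof -
    have "(\<Sum>y\<in>A - X. \<alpha> y) \<le> (\<Sum>y\<in>A1 \<union> (A2 - X). \<alpha> y)"
      using fA2 by (intro sum_mono2) (auto simp: A1_def \<alpha>_def)
    also have "\<dots> = (\<Sum>y\<in>A1. \<alpha> y) + (\<Sum>y\<in>A2 - X. \<alpha> y)"
      using fA2 by (intro sum.union_disjoint) (auto simp: A1_def)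
    also have "(\<Sum>y\<in>A1. \<alpha> y) \<le> (\<Sum>y\<in>A1. 2 * \<beta> y)"
      by (intro sum_mono) (auto simp: A1_def A2_def)
    finally show ?thesis using sA1b by (simp add: CA_def sum_distrib_left[symmetric])
  qed
  have sBX: "(\<Sum>y\<in>B \<inter> X. \<beta> y) \<le> 2*e + CB"
  proof -
    have "(\<Sum>y\<in>B \<inter> X. \<beta> y) \<le> (\<Sum>y\<in>B1 \<union> (B2 \<inter> X). \<beta> y)"
      using fB2 by (intro sum_mono2) (auto simp: B1_def \<beta>_def)
    also have "\<dots> = (\<Sum>y\<in>B1. \<beta> y) + (\<Sum>y\<in>B2 \<inter> X. \<beta> y)"
      using fB2 by (intro sum.union_disjoint) (auto simp: B1_def)
    also have "(\<Sum>y\<in>B1. \<beta> y) \<le> (\<Sum>y\<in>B1. 2 * \<alpha> y)"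
      by (intro sum_mono) (auto simp: B1_def B2_def)
    finally show ?thesis using sB1a by (simp add: CB_def sum_distrib_left[symmetric])
  qed
  have up: "e_between E (X \<inter> S) ((V - X) \<inter> S) \<le> 6*e + (CA + CB)"
  proof -
    have "real (e_between E (X \<inter> S) ((V - X) \<inter> S)) \<le> 2 * e + (\<Sum>y\<in>A - X. \<alpha> y) + (\<Sum>y\<in>B \<inter> X. \<beta> y)"
    proof -
      have "real (e_between E (X \<inter> S) ((V - X) \<inter> S)) \<le> real (2 * e_between E A B
        + (\<Sum>y\<in>A - X. card (nb E A y)) + (\<Sum>x\<in>B \<inter> X. card (nb E B x)))"
        using up0 by (simp only: of_nat_le_iff)
      then show ?thesis unfolding e_def \<alpha>_def \<beta>_def by simp
    qed
    then show ?thesis using sAX sBX by linarith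
  qed
  show False
    by (rule ar3[OF p q n0 _ _ k CAB d Xb Yb eG low up]) (use a b elt in \<open>auto simp: n_def e_def\<close>)
qed

lemma det:
  fixes p q \<delta> :: real and k :: nat
  assumes G: "simple_graph V E" and cd: "cut_dense V E q" and fin: "finite V" and n4: "4 \<le> card V"
    and SV: "S \<subseteq> V" and p: "0<p" "p\<le>1" and q: "0<q" "q\<le>1" and d: "\<delta> = p^4*q^3/2048"
    and k: "6144/(p^4*q^3) \<le> real k"
    and good: "\<forall>T\<in>fam V E k. p * card T - \<delta> * card V \<le> card (S \<inter> T)"
  shows "cut_dense S E (p^2*q/400)"
  unfolding cut_dense_def
proof (intro allI impI)
  fix A B assume AB: "A \<union> B = S \<and> A \<inter> B = {}"
  then have SAB: "A \<union> B = S" and disj: "A \<inter> B = {}" by auto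
  define n where "n = real (card V)"
  define D where "D = p*q*(n-1) - \<delta>*n"
  have n4': "4 \<le> n" using n4 by (simp add: n_def)
  have fS: "finite S" using fin SV finite_subset by auto
  have pq1: "p^3*q^2 \<le> 1" using p q by (simp add: mult_le_one power_le_one)
  have "p^4*q^3 = (p*q)*(p^3*q^2)" by (simp add: eval_nat_numeral)
  also have "\<dots> \<le> (p*q)*1" using pq1 p q by (intro mult_left_mono) auto
  finally have "p^4*q^3 \<le> p*q" by simp
  moreover have pq0: "0 < p*q" using p q by simp
  ultimately have dpq: "\<delta> \<le> p*q/8" using d by linarith
  have degS: "\<forall>w\<in>V. D \<le> card (nb E S w)"
  proof
    fix w assume w: "w \<in> V"
    have "nb E V w \<in> fam V E k" using w unfolding fam_def by blast
    then have 1: "p * card (nb E V w) - \<delta> * n \<le> card (S \<inter> nb E V w)" using good by (simp add: n_def)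
    have "S \<inter> nb E V w = nb E S w" using SV by (auto simp: nb_def)
    moreover have "q * (n - 1) \<le> card (nb E V w)" using deg[OF G cd fin w] by (simp add: n_def)
    then have "p * (q * (n - 1)) \<le> p * card (nb E V w)" using p by (intro mult_left_mono) auto
    ultimately show "D \<le> card (nb E S w)" using 1 by (simp add: D_def mult_ac)
  qed
  have Dd: "p*q*n/2 \<le> D"
  proof -
    have "\<delta>*n \<le> p*q/8*n" using dpq n4' by (intro mult_right_mono) auto
    moreover have "p*q*4 \<le> p*q*n" using n4' pq0 by (intro mult_left_mono) auto
    moreover have "D = p*q*n - p*q - \<delta>*n" unfolding D_def by (simp add: algebra_simps)
    moreover have "p*q/8*n = (p*q*n)/8" by simp
    moreover have "0 \<le> p*q*n" using pq0 n4' by simp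
    ultimately show ?thesis by linarith
  qed
  have key: "p^2*q/400 * n \<le> D - p*q/8 * n"
  proof -
    have "\<delta>*n \<le> p*q/8*n" using dpq n4' by (intro mult_right_mono) auto
    moreover have "p*q*4 \<le> p*q*n" using n4' pq0 by (intro mult_left_mono) auto
    moreover have "p^2*q/400 \<le> p*q/4"
    proof -
      have "p*(p*q) \<le> 1*(p*q)" using p pq0 by (intro mult_right_mono) auto
      then show ?thesis using pq0 by (simp add: power2_eq_square)
    qed
    then have "p^2*q/400*n \<le> p*q/4*n" using n4' by (intro mult_right_mono) auto
    moreover have "D = p*q*n - p*q - \<delta>*n" unfolding D_def by (simp add: algebra_simps)
    moreover have "p*q/8*n = (p*q*n)/8" "p*q/4*n = (p*q*n)/4" by simp_all
    moreover have "0 \<le> p*q*n" using pq0 n4' by simp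
    ultimately show ?thesis by linarith
  qed
  have c00: "0 \<le> p^2*q/400" using p q by simp
  show "p^2*q/400 * real (card A) * real (card B) \<le> real (e_between E A B)"
  proof (cases "card A \<le> p*q/8 * n")
    case True
    show ?thesis
      by (rule small_case[OF fin SV SAB disj _ _ _ c00, where \<theta>="p*q/8" and D=D])
         (use degS SV SAB True key in \<open>auto simp: n_def\<close>)
  next
    case cA: False
    show ?thesis
    proof (cases "card B \<le> p*q/8 * n")
      case True
      have SBA: "B \<union> A = S" using SAB by auto
      have "p^2*q/400 * real (card B) * real (card A) \<le> real (e_between E B A)"
        by (rule small_case[OF fin SV SBA _ _ _ _ c00, where \<theta>="p*q/8" and D=D])
           (use degS SV SAB True key disj in \<open>auto simp: n_def\<close>)
      moreover have "e_between E B A = e_between E A B"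
        using e_sym[OF G] SAB SV by auto
      ultimately show ?thesis by (simp add: mult_ac)
    next
      case False
      show ?thesis
        by (rule big_case[OF G cd fin SV SAB disj p q d k good _ degS])
           (use Dd cA False in \<open>auto simp: n_def\<close>)
    qed
  qed
qed

lemma card_fam:
  assumes fin: "finite V"
  shows "finite (fam V E k)" "card (fam V E k) \<le> (2*card V)^k * (2*card V) + card V"
proof -
  define L where "L = Ls k (V \<times> (UNIV :: bool set))"
  define F where "F qs = (\<lambda>x. nb E (V - Xs V E qs) x) ` V
       \<union> (\<lambda>j. {x\<in>Xs V E qs. j \<le> card (nb E (V - Xs V E qs) x)}) ` {1..card V}" for qs
  have fV2: "finite (V \<times> (UNIV :: bool set))" using fin by simp
  have finL: "finite L" unfolding L_def by (rule finite_lists_length_eq[OF fV2])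
  have cardL: "card L = (2*card V)^k"
    unfolding L_def card_lists_length_eq[OF fV2] by (simp add: card_cartesian_product mult.commute)
  have finF: "finite (F qs)" for qs using fin by (simp add: F_def)
  have cardF: "card (F qs) \<le> 2 * card V" for qs
  proof -
    have "card (F qs) \<le> card ((\<lambda>x. nb E (V - Xs V E qs) x) ` V)
       + card ((\<lambda>j. {x\<in>Xs V E qs. j \<le> card (nb E (V - Xs V E qs) x)}) ` {1..card V})"
      unfolding F_def by (rule card_Un_le)
    also have "\<dots> \<le> card V + card {1..card V}"
      by (intro add_mono card_image_le) (use fin in auto)
    finally show ?thesis by simp
  qed
  have eq: "fam V E k = (\<Union>qs\<in>L. F qs) \<union> (\<lambda>v. nb E V v) ` V"
    unfolding fam_def L_def F_def ..
  show "finite (fam V E k)" unfolding eq using finL finF fin by auto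
  have "card (fam V E k) \<le> card (\<Union>qs\<in>L. F qs) + card ((\<lambda>v. nb E V v) ` V)"
    unfolding eq by (rule card_Un_le)
  also have "card (\<Union>qs\<in>L. F qs) \<le> (\<Sum>qs\<in>L. card (F qs))" by (rule card_UN_le[OF finL])
  also have "\<dots> \<le> (\<Sum>qs\<in>L. 2 * card V)" by (intro sum_mono cardF)
  also have "card ((\<lambda>v. nb E V v) ` V) \<le> card V" by (rule card_image_le[OF fin])
  finally show "card (fam V E k) \<le> (2*card V)^k * (2*card V) + card V" using cardL by simp
qed

lemma asym:
  fixes \<kappa> \<epsilon> :: real and m :: nat
  assumes k0: "0 < \<kappa>" and e0: "0 < \<epsilon>"
  shows "\<exists>N. \<forall>n\<ge>N. 3 * real (2*n)^m * exp (- \<kappa> * n) \<le> \<epsilon>"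
proof -
  have f: "filterlim (\<lambda>n::nat. \<kappa> * real n) at_top sequentially"
    by (rule filterlim_tendsto_pos_mult_at_top[OF tendsto_const k0 filterlim_real_sequentially])
  have "((\<lambda>n::nat. (\<kappa> * real n)^m / exp (\<kappa> * real n)) \<longlongrightarrow> 0) sequentially"
    using filterlim_compose[OF tendsto_power_div_exp_0 f] .
  then have "((\<lambda>n::nat. 3 * (2/\<kappa>)^m * ((\<kappa> * real n)^m / exp (\<kappa> * real n))) \<longlongrightarrow> 3 * (2/\<kappa>)^m * 0) sequentially"
    by (intro tendsto_mult tendsto_const)
  moreover have "3 * (2/\<kappa>)^m * ((\<kappa> * real n)^m / exp (\<kappa> * real n)) = 3 * real (2*n)^m * exp (- \<kappa> * n)" for n
  proof -
    have "(2/\<kappa>)^m * (\<kappa> * real n)^m = ((2/\<kappa>) * (\<kappa> * real n))^m"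
      by (rule power_mult_distrib[symmetric])
    also have "(2/\<kappa>) * (\<kappa> * real n) = 2 * real n" using k0 by simp
    finally have 1: "(2/\<kappa>)^m * (\<kappa> * real n)^m = (2 * real n)^m" .
    have "3 * (2/\<kappa>)^m * ((\<kappa> * real n)^m / exp (\<kappa> * real n)) = 3 * ((2/\<kappa>)^m * (\<kappa> * real n)^m) / exp (\<kappa> * real n)"
      by simp
    also have "\<dots> = 3 * (2 * real n)^m / exp (\<kappa> * real n)" unfolding 1 ..
    also have "\<dots> = 3 * real (2*n)^m * exp (- \<kappa> * n)" by (simp add: exp_minus divide_inverse)
    finally show ?thesis .
  qed
  ultimately have "((\<lambda>n::nat. 3 * real (2*n)^m * exp (- \<kappa> * n)) \<longlongrightarrow> 0) sequentially" by simp
  from order_tendstoD(2)[OF this e0] obtain N where "\<forall>n\<ge>N. 3 * real (2*n)^m * exp (- \<kappa> * n) < \<epsilon>"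
    by (auto simp: eventually_sequentially)
  then show ?thesis by (auto intro: less_imp_le)
qed

lemma cut_dense_mono:
  assumes "cut_dense S E c0" "c \<le> c0" shows "cut_dense S E c"
  unfolding cut_dense_def
proof (intro allI impI)
  fix A B assume AB: "A \<union> B = S \<and> A \<inter> B = {}"
  then have 1: "c0 * real (card A) * real (card B) \<le> real (e_between E A B)"
    using assms(1) unfolding cut_dense_def by blast
  have "c * real (card A) * real (card B) \<le> c0 * real (card A) * real (card B)"
    using assms(2) by (intro mult_right_mono) auto
  then show "c * real (card A) * real (card B) \<le> real (e_between E A B)" using 1 by linarith
qed

theorem lemma3p11:
  fixes p q :: real
  assumes "0 < p" "p \<le> 1" "0 < q" "q \<le> 1"
  shows "\<forall>\<epsilon>>0. \<exists>N. \<forall>n\<ge>N. \<forall>E :: nat \<Rightarrow> nat \<Rightarrow> bool.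
           simple_graph {0..<n} E \<and> cut_dense {0..<n} E q \<longrightarrow>
           random_subset_prob {0..<n} p
             (\<lambda>S. cut_dense S E (p powr (20 / q ^ 3) * q ^ 3 / 400)) \<ge> 1 - \<epsilon>"
proof (intro allI impI)
  fix \<epsilon> :: real assume e0: "0 < \<epsilon>"
  have p: "0 < p" "p \<le> 1" and q: "0 < q" "q \<le> 1" using assms by auto
  define \<delta> where "\<delta> = p^4*q^3/2048"
  define k where "k = nat \<lceil>6144/(p^4*q^3)\<rceil>"
  define \<kappa> where "\<kappa> = (\<delta>/(2*p)) * \<delta> / (2 * (1 - \<delta>/(2*p)))"
  have kk: "6144/(p^4*q^3) \<le> real k" unfolding k_def by linarith
  have d0: "0 < \<delta>" using p q by (simp add: \<delta>_def)
  have dp: "\<delta> \<le> p"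
  proof -
    have "p^3*q^3 \<le> 1" using p q by (simp add: mult_le_one power_le_one)
    then have "p*(p^3*q^3) \<le> p*1" using p by (intro mult_left_mono) auto
    then have "p^4*q^3 \<le> p" by (simp add: eval_nat_numeral mult_ac)
    then show ?thesis using p by (simp add: \<delta>_def)
  qed
  have h: "\<delta>/(2*p) \<le> 1/2" using dp p by (simp add: field_simps)
  have k0: "0 < \<kappa>" unfolding \<kappa>_def using d0 p h by (intro divide_pos_pos mult_pos_pos) auto
  obtain N0 where N0: "\<forall>n\<ge>N0. 3 * real (2*n)^(k+1) * exp (- \<kappa> * n) \<le> \<epsilon>"
    using asym[OF k0 e0] by blast
  have cc: "p powr (20 / q ^ 3) * q ^ 3 / 400 \<le> p^2*q/400"
  proof -
    have "q^3 \<le> 1" using q by (simp add: power_le_one)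
    then have "2 \<le> 20 / q^3" using q by (simp add: field_simps)
    then have "p powr (20 / q ^ 3) \<le> p powr 2" using p by (intro powr_mono') auto
    also have "\<dots> = p^2" using p by simp
    finally have 1: "p powr (20 / q ^ 3) \<le> p^2" .
    have "q^3 \<le> q" using q by (simp add: power_le_one eval_nat_numeral mult_le_one mult_left_le_one_le)
    then show ?thesis using 1 p q by (intro divide_right_mono mult_mono) auto
  qed
  show "\<exists>N. \<forall>n\<ge>N. \<forall>E :: nat \<Rightarrow> nat \<Rightarrow> bool.
           simple_graph {0..<n} E \<and> cut_dense {0..<n} E q \<longrightarrow>
           random_subset_prob {0..<n} p
             (\<lambda>S. cut_dense S E (p powr (20 / q ^ 3) * q ^ 3 / 400)) \<ge> 1 - \<epsilon>"
  proof (intro exI allI impI)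
    fix n :: nat and E :: "nat \<Rightarrow> nat \<Rightarrow> bool"
    assume n: "max N0 4 \<le> n" and GE: "simple_graph {0..<n} E \<and> cut_dense {0..<n} E q"
    define V where "V = {0..<n}"
    have fin: "finite V" and cV: "card V = n" by (auto simp: V_def)
    have G: "simple_graph V E" and cd: "cut_dense V E q" using GE by (auto simp: V_def)
    define bad where "bad T S = (real (card (S \<inter> T)) < p * card T - \<delta> * card V)" for T S :: "nat set"
    have "random_subset_prob V p (\<lambda>S. cut_dense S E (p powr (20 / q ^ 3) * q ^ 3 / 400))
        \<ge> 1 - (\<Sum>T\<in>fam V E k. \<Sum>S\<in>Pow V. if bad T S then wt V p S else 0)"
    proof (rule union_bound[OF fin card_fam(1)[OF fin]])
      fix S assume SV: "S \<subseteq> V" and nb: "\<forall>T\<in>fam V E k. \<not> bad T S"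
      have "cut_dense S E (p^2*q/400)"
        by (rule det[OF G cd fin _ SV p q \<delta>_def kk]) (use nb n cV in \<open>auto simp: bad_def not_less\<close>)
      then show "cut_dense S E (p powr (20 / q ^ 3) * q ^ 3 / 400)" using cc by (rule cut_dense_mono)
    qed (use p in auto)
    moreover have "(\<Sum>T\<in>fam V E k. \<Sum>S\<in>Pow V. if bad T S then wt V p S else 0) \<le> \<epsilon>"
    proof -
      have "(\<Sum>T\<in>fam V E k. \<Sum>S\<in>Pow V. if bad T S then wt V p S else 0) \<le> (\<Sum>T\<in>fam V E k. exp (- \<kappa> * n))"
      proof (rule sum_mono)
        fix T assume T: "T \<in> fam V E k"
        have TV: "T \<subseteq> V" using T unfolding fam_def by (auto simp: nb_def Xs_def)
        show "(\<Sum>S\<in>Pow V. if bad T S then wt V p S else 0) \<le> exp (- \<kappa> * n)"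
          using tail[OF fin TV p d0 dp] by (simp add: bad_def \<kappa>_def cV)
      qed
      also have "\<dots> = card (fam V E k) * exp (- \<kappa> * n)" by simp
      also have "\<dots> \<le> real ((2*n)^k * (2*n) + n) * exp (- \<kappa> * n)"
      proof (rule mult_right_mono)
        show "real (card (fam V E k)) \<le> real ((2*n)^k * (2*n) + n)"
          using card_fam(2)[OF fin, of E k] unfolding cV by (simp only: of_nat_le_iff)
      qed simp
      also have "\<dots> \<le> 3 * real (2*n)^(k+1) * exp (- \<kappa> * n)"
      proof (rule mult_right_mono)
        have "n \<le> (2*n)^(k+1)"
        proof -
          have "n \<le> 2*n" by simp
          also have "2*n \<le> (2*n)^(k+1)" using n by (intro self_le_power) auto
          finally show ?thesis .
        qed
        then have "(2*n)^k * (2*n) + n \<le> 3 * (2*n)^(k+1)" by simp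
        then show "real ((2*n)^k * (2*n) + n) \<le> 3 * real (2*n)^(k+1)"
          by (metis of_nat_le_iff of_nat_mult of_nat_numeral of_nat_power)
      qed simp
      also have "\<dots> \<le> \<epsilon>" using N0 n by auto
      finally show ?thesis .
    qed
    ultimately show "random_subset_prob {0..<n} p (\<lambda>S. cut_dense S E (p powr (20 / q ^ 3) * q ^ 3 / 400)) \<ge> 1 - \<epsilon>"
      unfolding V_def by linarith
  qed
qed

end
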